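(* Let $U$ be a convex $2n$-gon with distinct vertices $U_1,\dots,U_{2n}$ in counterclockwise order, centered at the origin ($U_{i+n}=-U_i$, indices modulo $2n$), and let $P$ be a convex polygon with nonempty interior with vertex list $P_1,\dots,P_{2n}$ (consecutive entries may coincide) whose sides are parallel to the corresponding sides of $U$, i.e. $P_{i+1}-P_i=\lambda_{i+\frac12}(U_{i+1}-U_i)$ with $\lambda_{i+\frac12}\ge0$ for all $i$. The following statements are equivalent: (1) $P$ has constant $U$-width; (2) $P+(-P)$ is homothetic to $U$; (3) the corresponding diagonals of $U$ and $P$ are parallel, i.e. $P_i-P_{i+n}\parallel U_i-U_{i+n}$ for $1\le i\le n$; (4) there is a constant $a$ with $P_i-P_{i+n}=2a(U_i-U_{i+n})$ for $1\le i\le n$.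
   Context: The dual norm of the norm with unit ball $U$ is identified with $\|v\|=\sup\{[u,v]:u\in U\}$, where $[x,y]$ is the determinant of the matrix with columns $x,y$. For $\|v\|=1$, $h(P)(v)=\sup\{[p,v]:p\in P\}$ and $w(P)(v)=h(P)(v)+h(P)(-v)$; $P$ has constant $U$-width if $w(P)(v)$ is independent of $v$. *)

theory Defs
  imports "HOL-Analysis.Analysis"
begin

definition det2 :: "real^2 \<Rightarrow> real^2 \<Rightarrow> real" where
  "det2 x y = x$1 * y$2 - x$2 * y$1"

text \<open>Dual norm of the norm with unit ball K: sup of [u,v] over u in K.\<close>
definition dual_norm :: "(real^2) set \<Rightarrow> real^2 \<Rightarrow> real" where
  "dual_norm K v = Sup ((\<lambda>u. det2 u v) ` K)"

definition supp :: "(real^2) set \<Rightarrow> real^2 \<Rightarrow> real" where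
  "supp P v = Sup ((\<lambda>p. det2 p v) ` P)"

definition width :: "(real^2) set \<Rightarrow> real^2 \<Rightarrow> real" where
  "width P v = supp P v + supp P (- v)"

definition const_width :: "(real^2) set \<Rightarrow> (real^2) set \<Rightarrow> bool" where
  "const_width U P \<longleftrightarrow> (\<exists>c. \<forall>v. dual_norm U v = 1 \<longrightarrow> width P v = c)"

definition homothetic :: "(real^2) set \<Rightarrow> (real^2) set \<Rightarrow> bool" where
  "homothetic A B \<longleftrightarrow> (\<exists>a t. a \<noteq> 0 \<and> A = (\<lambda>x. t + a *\<^sub>R x) ` B)"

definition parallel :: "real^2 \<Rightarrow> real^2 \<Rightarrow> bool" where
  "parallel x y \<longleftrightarrow> det2 x y = 0"

end

theory Submission imports Defs begin

lemma det2_add1[simp]: "det2 (x + y) v = det2 x v + det2 y v" by (simp add: det2_def algebra_simps)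
lemma det2_add2[simp]: "det2 v (x + y) = det2 v x + det2 v y" by (simp add: det2_def algebra_simps)
lemma det2_diff1[simp]: "det2 (x - y) v = det2 x v - det2 y v" by (simp add: det2_def algebra_simps)
lemma det2_diff2[simp]: "det2 v (x - y) = det2 v x - det2 v y" by (simp add: det2_def algebra_simps)
lemma det2_neg1[simp]: "det2 (- x) v = - det2 x v" by (simp add: det2_def algebra_simps)
lemma det2_neg2[simp]: "det2 v (- x) = - det2 v x" by (simp add: det2_def algebra_simps)
lemma det2_scale1[simp]: "det2 (c *\<^sub>R x) v = c * det2 x v" by (simp add: det2_def algebra_simps)
lemma det2_scale2[simp]: "det2 v (c *\<^sub>R x) = c * det2 v x" by (simp add: det2_def algebra_simps)
lemma det2_self[simp]: "det2 x x = 0" by (simp add: det2_def algebra_simps)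
lemma det2_swap: "det2 x y = - det2 y x" by (simp add: det2_def algebra_simps)
lemma det2_zero1[simp]: "det2 0 x = 0" by (simp add: det2_def)
lemma det2_zero2[simp]: "det2 x 0 = 0" by (simp add: det2_def)

lemma det2_ident: "det2 b c * det2 X a = - det2 c a * det2 X b + det2 b a * det2 X c"
  by (simp add: det2_def algebra_simps)

lemma det2_decomp: "det2 a b \<noteq> 0 \<Longrightarrow> det2 y a = 0 \<Longrightarrow> y = (det2 y b / det2 a b) *\<^sub>R a"
  by (simp add: vec_eq_iff forall_2 det2_def field_simps)

lemma det2_zero_both: "det2 a b \<noteq> 0 \<Longrightarrow> det2 y a = 0 \<Longrightarrow> det2 y b = 0 \<Longrightarrow> y = 0"
  using det2_decomp[of a b y] by simp

lemma hull_max: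
  fixes S :: "(real^2) set"
  assumes "\<forall>y\<in>S. det2 y v \<le> b" "x \<in> convex hull S"
  shows "det2 x v \<le> b"
proof -
  have cv: "convex {x. det2 x v \<le> b}"
    unfolding convex_def
  proof (intro ballI allI impI)
    fix x y and u w :: real assume xy: "x \<in> {x. det2 x v \<le> b}" "y \<in> {x. det2 x v \<le> b}"
      and h: "0 \<le> u" "0 \<le> w" "u + w = 1"
    have "u * det2 x v + w * det2 y v \<le> u * b + w * b"
      using xy h by (intro add_mono mult_left_mono) auto
    then show "u *\<^sub>R x + w *\<^sub>R y \<in> {x. det2 x v \<le> b}" using h by (simp add: distrib_right[symmetric])
  qed
  have "convex hull S \<subseteq> {x. det2 x v \<le> b}"
    by (rule hull_minimal) (use assms cv in auto)
  then show ?thesis using assms by auto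
qed

lemma mod_neq: "(a::nat) < b \<Longrightarrow> b < a + N \<Longrightarrow> a mod N \<noteq> b mod N"
  using mod_eq_dvd_iff_nat[of a b N] dvd_imp_le[of N "b-a"] by auto

lemma exists_shift: "(0::nat) < N \<Longrightarrow> \<exists>t<N. (i + t) mod N = k mod N"
proof -
  assume N: "0 < N"
  define r where "r = i mod N"
  define s where "s = k mod N"
  have r: "r < N" "s < N" using N by (auto simp: r_def s_def)
  have i: "i = (i div N) * N + r" by (simp add: r_def)
  show ?thesis
  proof (cases "r \<le> s")
    case True
    have "(i + (s - r)) mod N = ((i div N) * N + s) mod N"
      using True by (subst i) (simp)
    also have "\<dots> = s" using r by simp
    finally show ?thesis using r True by (intro exI[of _ "s - r"]) (auto simp: s_def)
  next
    case False
    have "(i + (N + s - r)) mod N = ((Suc (i div N)) * N + s) mod N"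
      using False r by (subst i) (simp add: algebra_simps)
    also have "\<dots> = s" by (metis add.commute mod_mult_self1 mod_less r(2))
    finally show ?thesis using r False by (intro exI[of _ "N + s - r"]) (auto simp: s_def)
  qed
qed

lemma mod_neq': "(a::nat) < b \<Longrightarrow> b < a + N \<Longrightarrow> b mod N \<noteq> a mod N"
  using mod_neq[of a b N] by auto

locale cw =
  fixes n :: nat and U P :: "nat \<Rightarrow> real^2" and lam :: "nat \<Rightarrow> real"
  assumes n2: "n \<ge> 2"
    and conv: "\<forall>i<2*n. \<forall>j<2*n. j \<noteq> i \<and> j \<noteq> (i+1) mod (2*n) \<longrightarrow>
                          det2 (U ((i+1) mod (2*n)) - U i) (U j - U i) > 0"
    and sym: "\<forall>i<2*n. U ((i+n) mod (2*n)) = - U i"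
    and sides: "\<forall>i<2*n. lam i \<ge> 0 \<and>
                    P ((i+1) mod (2*n)) - P i = lam i *\<^sub>R (U ((i+1) mod (2*n)) - U i)"
begin

definition Uq where "Uq j = U (j mod (2*n))"
definition Pq where "Pq j = P (j mod (2*n))"
definition lq where "lq j = lam (j mod (2*n))"
definition e where "e j = Uq (Suc j) - Uq j"

lemma Npos: "0 < 2*n" using n2 by simp

lemma Uq_mod: "Uq (j mod (2*n)) = Uq j" by (simp add: Uq_def)
lemma Pq_mod: "Pq (j mod (2*n)) = Pq j" by (simp add: Pq_def)
lemma Uq_per: "Uq (j + 2*n) = Uq j" by (simp add: Uq_def)
lemma Pq_per: "Pq (j + 2*n) = Pq j" by (simp add: Pq_def)

lemma Uq_sym: "Uq (j + n) = - Uq j"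
proof -
  have "(j + n) mod (2*n) = (j mod (2*n) + n) mod (2*n)" by (simp add: mod_add_left_eq)
  then show ?thesis using sym Npos by (simp add: Uq_def)
qed

lemma e_sym: "e (j + n) = - e j"
  using Uq_sym[of "Suc j"] Uq_sym[of j] by (simp add: e_def)

lemma sucmod: "(k mod (2*n) + 1) mod (2*n) = Suc k mod (2*n)"
  by (metis Suc_eq_plus1 mod_Suc_eq)

lemma conv':
  assumes "j mod (2*n) \<noteq> k mod (2*n)" "j mod (2*n) \<noteq> Suc k mod (2*n)"
  shows "det2 (e k) (Uq j - Uq k) > 0"
proof -
  have "det2 (U ((k mod (2*n) + 1) mod (2*n)) - U (k mod (2*n))) (U (j mod (2*n)) - U (k mod (2*n))) > 0"
    apply (rule conv[rule_format]) using Npos assms sucmod by auto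
  then show ?thesis by (simp only: e_def Uq_def sucmod)
qed

lemma sides': "lq j \<ge> 0 \<and> Pq (Suc j) = Pq j + lq j *\<^sub>R e j"
proof -
  have "lam (j mod (2*n)) \<ge> 0 \<and> P ((j mod (2*n) + 1) mod (2*n)) - P (j mod (2*n))
      = lam (j mod (2*n)) *\<^sub>R (U ((j mod (2*n) + 1) mod (2*n)) - U (j mod (2*n)))"
    using sides Npos by simp
  then have "lam (j mod (2*n)) \<ge> 0 \<and> P (Suc j mod (2*n)) - P (j mod (2*n))
      = lam (j mod (2*n)) *\<^sub>R (U (Suc j mod (2*n)) - U (j mod (2*n)))" by (simp only: sucmod)
  then show ?thesis by (simp add: lq_def Pq_def e_def Uq_def algebra_simps)
qed

lemma delta_pos: "det2 (Uq i) (e i) > 0"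
proof -
  have "det2 (e i) (Uq (i+n) - Uq i) > 0"
    by (rule conv'[OF mod_neq' mod_neq']) (use n2 in auto)
  then show ?thesis using det2_swap[of "e i" "Uq i"] by (simp only: det2_diff2 Uq_sym det2_neg2)
qed

lemma e_turn: "det2 (e i) (e (Suc i)) > 0"
proof -
  have "det2 (e i) (Uq (Suc (Suc i)) - Uq i) > 0"
    by (rule conv'[OF mod_neq' mod_neq']) (use n2 in auto)
  moreover have "Uq (Suc i) = Uq i + e i" by (simp add: e_def)
  ultimately show ?thesis by (simp add: e_def[of "Suc i"])
qed

lemma e_nz: "e i \<noteq> 0" using e_turn[of i] by auto

lemma T: "1 \<le> d \<Longrightarrow> d \<le> n - 1 \<Longrightarrow> det2 (e i) (e (i + d)) > 0"
proof (induction d)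
  case 0 then show ?case by simp
next
  case (Suc d)
  show ?case
  proof (cases "d = 0")
    case True then show ?thesis using e_turn[of i] by simp
  next
    case False
    then have IH: "det2 (e i) (e (i+d)) > 0" using Suc by simp
    define m where "m = i + Suc d"
    define X where "X = Uq (i+n) - Uq m"
    have b1: "det2 (e (i+d)) X > 0"
    proof -
      have "det2 (e (i+d)) (Uq (i+n) - Uq (i+d)) > 0"
        by (rule conv'[OF mod_neq' mod_neq']) (use Suc.prems False in auto)
      moreover have "Uq m = Uq (i+d) + e (i+d)" by (simp add: m_def e_def)
      ultimately show ?thesis by (simp add: X_def)
    qed
    have c1: "det2 (e m) X \<ge> 0"
    proof (cases "Suc (Suc d) = n")
      case True then have "X = e m" by (auto simp add: X_def e_def m_def)
      then show ?thesis by simp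
    next
      case False
      have "det2 (e m) (Uq (i+n) - Uq m) > 0"
        by (rule conv'[OF mod_neq' mod_neq']) (use Suc.prems False in \<open>auto simp: m_def\<close>)
      then show ?thesis by (simp add: X_def)
    qed
    have a1: "det2 (e i) X > 0"
    proof -
      have "det2 (e (i+n)) (Uq m - Uq (i+n)) > 0"
        by (rule conv'[OF mod_neq mod_neq]) (use Suc.prems in \<open>auto simp: m_def\<close>)
      then show ?thesis using e_sym[of i] by (simp add: X_def)
    qed
    have bc: "det2 (e (i+d)) (e m) > 0" using e_turn[of "i+d"] by (simp add: m_def)
    show ?thesis
    proof (rule ccontr)
      assume "\<not> ?thesis"
      then have h: "det2 (e i) (e m) \<le> 0" by (simp add: m_def)
      have id: "det2 (e (i+d)) (e m) * det2 X (e i) = - det2 (e m) (e i) * det2 X (e (i+d)) + det2 (e (i+d)) (e i) * det2 X (e m)"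
        by (rule det2_ident)
      have s1: "det2 X (e i) < 0" using a1 det2_swap[of X "e i"] by simp
      have s2: "- det2 (e m) (e i) \<le> 0" using h det2_swap[of "e m" "e i"] by simp
      have s3: "det2 X (e (i+d)) < 0" using b1 det2_swap[of X "e (i+d)"] by simp
      have s4: "det2 (e (i+d)) (e i) < 0" using IH det2_swap[of "e (i+d)" "e i"] by simp
      have s5: "det2 X (e m) \<le> 0" using c1 det2_swap[of X "e m"] by simp
      have "det2 (e (i+d)) (e m) * det2 X (e i) < 0" using bc s1 by (rule mult_pos_neg)
      moreover have "- det2 (e m) (e i) * det2 X (e (i+d)) \<ge> 0" using s2 s3 by (intro mult_nonpos_nonpos) auto
      moreover have "det2 (e (i+d)) (e i) * det2 X (e m) \<ge> 0" using s4 s5 by (intro mult_nonpos_nonpos) auto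
      ultimately show False using id by linarith
    qed
  qed
qed

lemma T': "d \<le> n - 1 \<Longrightarrow> det2 (e i) (e (i + d)) \<ge> 0"
  using T[of d i] by (cases "d = 0") auto

definition good :: "(nat \<Rightarrow> real^2) \<Rightarrow> (nat \<Rightarrow> real) \<Rightarrow> bool" where
  "good Q lQ \<longleftrightarrow> (\<forall>j. Q (j mod (2*n)) = Q j) \<and> (\<forall>j. lQ j \<ge> 0 \<and> Q (Suc j) = Q j + lQ j *\<^sub>R e j)"

lemma good_P: "good Pq lq" using sides' Pq_mod by (simp add: good_def)
lemma good_U: "good Uq (\<lambda>_. 1)" using Uq_mod by (simp add: good_def e_def)

lemma M:
  assumes g: "good Q lQ"
  shows "det2 (Q k - Q i) (e i) \<le> 0"
proof -
  have Qmod: "\<And>j. Q (j mod (2*n)) = Q j" and Qstep: "\<And>j. lQ j \<ge> 0" "\<And>j. Q (Suc j) = Q j + lQ j *\<^sub>R e j"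
    using g by (auto simp: good_def)
  have Qper: "Q (j + 2*n) = Q j" for j using Qmod[of "j + 2*n"] Qmod[of j] by simp
  have A: "d \<le> n \<Longrightarrow> det2 (Q (i+d) - Q i) (e i) \<le> 0" for d
  proof (induction d)
    case 0 show ?case by simp
  next
    case (Suc d)
    have q: "Q (i + Suc d) = Q (i+d) + lQ (i+d) *\<^sub>R e (i+d)" using Qstep by simp
    have "det2 (e (i+d)) (e i) \<le> 0" using T'[of d i] Suc.prems det2_swap[of "e (i+d)" "e i"] by simp
    then have "lQ (i+d) * det2 (e (i+d)) (e i) \<le> 0" using Qstep by (intro mult_nonneg_nonpos) auto
    then show ?case using Suc q by simp
  qed
  have B: "d \<le> n \<Longrightarrow> det2 (Q (i + n + (n - d)) - Q i) (e i) \<le> 0" for d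
  proof (induction d)
    case 0 show ?case using Qper[of i] by (simp add: add.assoc mult_2)
  next
    case (Suc d)
    define j where "j = i + n + (n - Suc d)"
    have sj: "Suc j = i + n + (n - d)" using Suc.prems by (simp add: j_def)
    have jj: "j = (i + (n - Suc d)) + n" by (simp add: j_def)
    have ej: "e j = - e (i + (n - Suc d))" unfolding jj by (rule e_sym)
    have "det2 (e i) (e (i + (n - Suc d))) \<ge> 0" by (rule T') (use Suc.prems in simp)
    then have "det2 (e j) (e i) \<ge> 0" using ej det2_swap[of "e i" "e (i + (n - Suc d))"] by simp
    then have l: "lQ j * det2 (e j) (e i) \<ge> 0" using Qstep by simp
    have IH: "det2 (Q (Suc j) - Q i) (e i) \<le> 0" using Suc sj by simp
    have "Q j = Q (Suc j) - lQ j *\<^sub>R e j" using Qstep by simp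
    then have "det2 (Q j - Q i) (e i) \<le> 0" using IH l by simp
    then show ?case by (simp only: j_def)
  qed
  obtain t where t: "t < 2*n" "(i + t) mod (2*n) = k mod (2*n)" using exists_shift Npos by blast
  have "Q k = Q (k mod (2*n))" using Qmod[of k] by simp
  also have "\<dots> = Q ((i+t) mod (2*n))" using t(2) by simp
  also have "\<dots> = Q (i+t)" using Qmod[of "i+t"] by simp
  finally have Qk: "Q k = Q (i+t)" .
  show ?thesis
  proof (cases "t \<le> n")
    case True then show ?thesis using A Qk by simp
  next
    case False
    then have eq: "i + n + (n - (2*n - t)) = i + t" using t by simp
    have "det2 (Q (i + n + (n - (2*n - t))) - Q i) (e i) \<le> 0" by (rule B) (use t False in simp)
    then show ?thesis by (simp only: eq Qk)
  qed
qed

lemma M2: "good Q lQ \<Longrightarrow> det2 (Q k - Q (Suc i)) (e i) \<le> 0"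
  using M[of Q lQ k i] by (simp add: good_def)

lemma Mmin: "good Q lQ \<Longrightarrow> det2 (Q k - Q (i+n)) (e i) \<ge> 0"
  using M[of Q lQ k "i+n"] by (simp add: e_sym)

lemma Mmin2: "good Q lQ \<Longrightarrow> det2 (Q k - Q (Suc i + n)) (e i) \<ge> 0"
  using M2[of Q lQ k "i+n"] by (simp add: e_sym)


lemma Gmax: "\<exists>J. \<forall>Q lQ. good Q lQ \<longrightarrow> (\<forall>k. det2 (Q k - Q J) v \<le> 0 \<and> det2 (Q k - Q (J+n)) v \<ge> 0)"
proof -
  define s where "s j = det2 (e j) v" for j
  have ssym: "s (j+n) = - s j" for j by (simp add: s_def e_sym)
  have "\<exists>j. s j \<ge> 0 \<and> s (Suc j) \<le> 0"
  proof (cases "\<exists>j0. s j0 > 0")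
    case True
    then obtain j0 where j0: "s j0 > 0" by blast
    have ex: "\<exists>d. s (j0 + d) \<le> 0" using ssym[of j0] j0 by (intro exI[of _ n]) simp
    define d where "d = (LEAST d. s (j0+d) \<le> 0)"
    have d1: "s (j0 + d) \<le> 0" unfolding d_def by (rule LeastI_ex[OF ex])
    have "d \<noteq> 0" using d1 j0 by (cases d) auto
    then obtain d' where d': "d = Suc d'" by (cases d) auto
    have "\<not> s (j0 + d') \<le> 0" using not_less_Least[of d' "\<lambda>d. s (j0+d) \<le> 0"] d' d_def by simp
    then show ?thesis using d1 d' by (intro exI[of _ "j0+d'"]) auto
  next
    case False
    then have all: "\<forall>j. s j \<le> 0" by (simp add: not_less)
    have "s (0+n) \<le> 0" using all by blast
    then have "s 0 \<ge> 0" using ssym[of 0] by linarith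
    then show ?thesis using all by blast
  qed
  then obtain j where j: "s j \<ge> 0" "s (Suc j) \<le> 0" by blast
  show ?thesis
  proof (intro exI[of _ "Suc j"] allI impI conjI)
    fix Q lQ k assume g: "good Q lQ"
    have bc: "det2 (e j) (e (Suc j)) > 0" by (rule e_turn)
    define X where "X = Q k - Q (Suc j)"
    have id1: "det2 (e j) (e (Suc j)) * det2 X v = - s (Suc j) * det2 X (e j) + s j * det2 X (e (Suc j))"
      using det2_ident[of "e j" "e (Suc j)" X v] by (simp add: s_def)
    have X1: "det2 X (e j) \<le> 0" unfolding X_def by (rule M2[OF g])
    have X2: "det2 X (e (Suc j)) \<le> 0" unfolding X_def by (rule M[OF g])
    have "- s (Suc j) * det2 X (e j) \<le> 0" using j X1 by (intro mult_nonneg_nonpos) auto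
    moreover have "s j * det2 X (e (Suc j)) \<le> 0" using j X2 by (intro mult_nonneg_nonpos) auto
    ultimately have "det2 (e j) (e (Suc j)) * det2 X v \<le> 0" using id1 by linarith
    then have "det2 X v \<le> 0" using bc by (simp add: mult_le_0_iff)
    then show "det2 (Q k - Q (Suc j)) v \<le> 0" by (simp add: X_def)
    define Y where "Y = Q k - Q (Suc j + n)"
    have id2: "det2 (e j) (e (Suc j)) * det2 Y v = - s (Suc j) * det2 Y (e j) + s j * det2 Y (e (Suc j))"
      using det2_ident[of "e j" "e (Suc j)" Y v] by (simp add: s_def)
    have Y1: "det2 Y (e j) \<ge> 0" unfolding Y_def using Mmin2[OF g, of k j] by simp
    have Y2: "det2 Y (e (Suc j)) \<ge> 0" unfolding Y_def by (rule Mmin[OF g])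
    have "- s (Suc j) * det2 Y (e j) \<ge> 0" using j Y1 by (intro mult_nonneg_nonneg) auto
    moreover have "s j * det2 Y (e (Suc j)) \<ge> 0" using j Y2 by (intro mult_nonneg_nonneg) auto
    ultimately have "det2 (e j) (e (Suc j)) * det2 Y v \<ge> 0" using id2 by linarith
    then have "det2 Y v \<ge> 0" using bc by (simp add: zero_le_mult_iff)
    then show "det2 (Q k - Q (Suc j + n)) v \<ge> 0" by (simp add: Y_def)
  qed
qed

definition "UU = convex hull (U ` {..<2*n})"
definition "PP = convex hull (P ` {..<2*n})"
definition "DD = {p + q | p q. p \<in> PP \<and> q \<in> uminus ` PP}"

lemma UqUU: "Uq k \<in> UU"
  unfolding UU_def Uq_def by (rule hull_inc) (use Npos in auto)
lemma PqPP: "Pq k \<in> PP"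
  unfolding PP_def Pq_def by (rule hull_inc) (use Npos in auto)

lemma UU_bound: assumes "\<forall>k. det2 (Uq k) v \<le> b" "x \<in> UU" shows "det2 x v \<le> b"
proof -
  have "\<forall>y\<in>U ` {..<2*n}. det2 y v \<le> b"
  proof
    fix y assume "y \<in> U ` {..<2*n}"
    then obtain k where k: "k < 2*n" "y = U k" by auto
    then have "Uq k = y" by (simp add: Uq_def)
    then show "det2 y v \<le> b" using assms(1) by blast
  qed
  then show ?thesis using hull_max assms(2) unfolding UU_def by blast
qed
lemma PP_bound: assumes "\<forall>k. det2 (Pq k) v \<le> b" "x \<in> PP" shows "det2 x v \<le> b"
proof -
  have "\<forall>y\<in>P ` {..<2*n}. det2 y v \<le> b"
  proof
    fix y assume "y \<in> P ` {..<2*n}"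
    then obtain k where k: "k < 2*n" "y = P k" by auto
    then have "Pq k = y" by (simp add: Pq_def)
    then show "det2 y v \<le> b" using assms(1) by blast
  qed
  then show ?thesis using hull_max assms(2) unfolding PP_def by blast
qed

lemma dn_eval: "\<forall>k. det2 (Uq k - Uq J) v \<le> 0 \<Longrightarrow> dual_norm UU v = det2 (Uq J) v"
  unfolding dual_norm_def
  by (rule cSup_eq_maximum) (use UqUU UU_bound in auto)

lemma supp_eval: "\<forall>k. det2 (Pq k - Pq J) v \<le> 0 \<Longrightarrow> supp PP v = det2 (Pq J) v"
  unfolding supp_def
  by (rule cSup_eq_maximum) (use PqPP PP_bound in auto)

lemma width_eval: "\<forall>k. det2 (Pq k - Pq J) v \<le> 0 \<Longrightarrow> \<forall>k. det2 (Pq k - Pq J') v \<ge> 0 \<Longrightarrow>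
   width PP v = det2 (Pq J - Pq J') v"
proof -
  assume a: "\<forall>k. det2 (Pq k - Pq J) v \<le> 0" "\<forall>k. det2 (Pq k - Pq J') v \<ge> 0"
  have "supp PP (-v) = det2 (Pq J') (-v)" by (rule supp_eval) (use a(2) in simp)
  then show ?thesis using supp_eval[OF a(1)] by (simp add: width_def)
qed

lemma DD_mem: "x \<in> DD \<longleftrightarrow> (\<exists>p q. x = p - q \<and> p \<in> PP \<and> q \<in> PP)"
  unfolding DD_def by force

lemma Wv: "\<exists>J. dual_norm UU v = det2 (Uq J) v \<and> dual_norm UU (-v) = det2 (Uq J) v \<and>
   width PP v = det2 (Pq J - Pq (J+n)) v \<and>
   (\<forall>x\<in>UU. det2 x v \<le> det2 (Uq J) v \<and> det2 (Uq (J+n)) v \<le> det2 x v) \<and>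
   (\<forall>x\<in>DD. det2 x v \<le> det2 (Pq J - Pq (J+n)) v) \<and> Pq J - Pq (J+n) \<in> DD"
proof -
  obtain J where J: "\<forall>Q lQ. good Q lQ \<longrightarrow> (\<forall>k. det2 (Q k - Q J) v \<le> 0 \<and> det2 (Q k - Q (J+n)) v \<ge> 0)"
    using Gmax by blast
  have U1: "\<forall>k. det2 (Uq k - Uq J) v \<le> 0" and U2: "\<forall>k. det2 (Uq k - Uq (J+n)) v \<ge> 0"
    using J good_U by blast+
  have P1: "\<forall>k. det2 (Pq k - Pq J) v \<le> 0" and P2: "\<forall>k. det2 (Pq k - Pq (J+n)) v \<ge> 0"
    using J good_P by blast+
  have d1: "dual_norm UU v = det2 (Uq J) v" by (rule dn_eval[OF U1])
  have "dual_norm UU (-v) = det2 (Uq (J+n)) (-v)" by (rule dn_eval) (use U2 in simp)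
  then have d2: "dual_norm UU (-v) = det2 (Uq J) v" by (simp add: Uq_sym)
  have w: "width PP v = det2 (Pq J - Pq (J+n)) v" by (rule width_eval[OF P1 P2])
  have ub: "\<forall>x\<in>UU. det2 x v \<le> det2 (Uq J) v \<and> det2 (Uq (J+n)) v \<le> det2 x v"
  proof
    fix x assume x: "x \<in> UU"
    have "det2 x v \<le> det2 (Uq J) v" by (rule UU_bound[OF _ x]) (use U1 in simp)
    moreover have "det2 x (-v) \<le> det2 (Uq (J+n)) (-v)" by (rule UU_bound[OF _ x]) (use U2 in simp)
    ultimately show "det2 x v \<le> det2 (Uq J) v \<and> det2 (Uq (J+n)) v \<le> det2 x v" by simp
  qed
  have db: "\<forall>x\<in>DD. det2 x v \<le> det2 (Pq J - Pq (J+n)) v"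
  proof
    fix x assume "x \<in> DD"
    then obtain p q where pq: "x = p - q" "p \<in> PP" "q \<in> PP" by (auto simp: DD_mem)
    have "det2 p v \<le> det2 (Pq J) v" by (rule PP_bound[OF _ pq(2)]) (use P1 in simp)
    moreover have "det2 q (-v) \<le> det2 (Pq (J+n)) (-v)" by (rule PP_bound[OF _ pq(3)]) (use P2 in simp)
    ultimately show "det2 x v \<le> det2 (Pq J - Pq (J+n)) v" using pq by simp
  qed
  have "Pq J - Pq (J+n) \<in> DD" using PqPP by (auto simp: DD_mem)
  then show ?thesis using d1 d2 w ub db by blast
qed

lemma ystep: "Pq (Suc j) - Pq (Suc j + n) = Pq j - Pq (j+n) + (lq j + lq (j+n)) *\<^sub>R e j"
proof -
  have a: "Pq (Suc j) = Pq j + lq j *\<^sub>R e j" using sides' by simp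
  have b: "Pq (Suc j + n) = Pq (j+n) - lq (j+n) *\<^sub>R e j"
    using sides'[of "j+n"] e_sym[of j] by simp
  show ?thesis unfolding a b by (simp add: algebra_simps)
qed

lemma cw_to_E:
  assumes "const_width UU PP"
  shows "\<exists>c. \<forall>j. Pq j - Pq (j+n) = c *\<^sub>R Uq j"
proof -
  obtain c0 where h: "\<forall>v. dual_norm UU v = 1 \<longrightarrow> width PP v = c0"
    using assms by (auto simp: const_width_def)
  have key: "det2 (Pq i - Pq (i+n)) (e i) = c0 * det2 (Uq i) (e i)" for i
  proof -
    define \<delta> where "\<delta> = det2 (Uq i) (e i)"
    have \<delta>: "\<delta> > 0" using delta_pos by (simp add: \<delta>_def)
    define v where "v = (1/\<delta>) *\<^sub>R e i"
    have U1: "\<forall>k. det2 (Uq k - Uq i) v \<le> 0"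
    proof
      fix k
      have "det2 (Uq k - Uq i) (e i) \<le> 0" by (rule M[OF good_U])
      then have "(1/\<delta>) * det2 (Uq k - Uq i) (e i) \<le> 0" using \<delta> by (intro mult_nonneg_nonpos) auto
      then show "det2 (Uq k - Uq i) v \<le> 0" by (simp only: v_def det2_scale2)
    qed
    have P1: "\<forall>k. det2 (Pq k - Pq i) v \<le> 0"
    proof
      fix k
      have "det2 (Pq k - Pq i) (e i) \<le> 0" by (rule M[OF good_P])
      then have "(1/\<delta>) * det2 (Pq k - Pq i) (e i) \<le> 0" using \<delta> by (intro mult_nonneg_nonpos) auto
      then show "det2 (Pq k - Pq i) v \<le> 0" by (simp only: v_def det2_scale2)
    qed
    have P2: "\<forall>k. det2 (Pq k - Pq (i+n)) v \<ge> 0"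
    proof
      fix k
      have "det2 (Pq k - Pq (i+n)) (e i) \<ge> 0" by (rule Mmin[OF good_P])
      then have "(1/\<delta>) * det2 (Pq k - Pq (i+n)) (e i) \<ge> 0" using \<delta> by (intro mult_nonneg_nonneg) auto
      then show "det2 (Pq k - Pq (i+n)) v \<ge> 0" by (simp only: v_def det2_scale2)
    qed
    have "dual_norm UU v = det2 (Uq i) v" by (rule dn_eval[OF U1])
    also have "\<dots> = 1" using \<delta> by (simp add: v_def \<delta>_def)
    finally have "width PP v = c0" using h by blast
    moreover have "width PP v = det2 (Pq i - Pq (i+n)) v" by (rule width_eval[OF P1 P2])
    ultimately have "(1/\<delta>) * det2 (Pq i - Pq (i+n)) (e i) = c0" by (simp only: v_def det2_scale2)
    then show ?thesis using \<delta> by (simp add: \<delta>_def[symmetric] field_simps)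
  qed
  define w where "w j = Pq j - Pq (j+n) - c0 *\<^sub>R Uq j" for j
  have w0: "det2 (w j) (e j) = 0" for j using key[of j] by (simp add: w_def)
  have ws: "w (Suc j) = w j + (lq j + lq (j+n) - c0) *\<^sub>R e j" for j
  proof -
    have u: "Uq (Suc j) = Uq j + e j" by (simp add: e_def)
    have "w (Suc j) = (Pq (Suc j) - Pq (Suc j + n)) - c0 *\<^sub>R Uq (Suc j)" by (simp add: w_def)
    also have "\<dots> = w j + (lq j + lq (j+n) - c0) *\<^sub>R e j"
      unfolding ystep u w_def by (simp add: algebra_simps)
    finally show ?thesis .
  qed
  have wS: "w (Suc j) = 0" for j
  proof (rule det2_zero_both)
    show "det2 (e j) (e (Suc j)) \<noteq> 0" using e_turn[of j] by simp
    show "det2 (w (Suc j)) (e j) = 0" unfolding ws using w0[of j] by simp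
    show "det2 (w (Suc j)) (e (Suc j)) = 0" by (rule w0)
  qed
  have wz: "w j = 0" for j
  proof -
    have "Suc (j + (2*n - 1)) = j + 2*n" using n2 by simp
    moreover have "w (j + 2*n) = w j"
      using Pq_per[of j] Pq_per[of "j+n"] Uq_per[of j] by (simp add: w_def add.commute add.left_commute)
    ultimately show ?thesis using wS[of "j + (2*n - 1)"] by simp
  qed
  show ?thesis using wz by (intro exI[of _ c0]) (simp add: w_def)
qed

lemma E_to_cw:
  assumes "\<forall>j. Pq j - Pq (j+n) = c *\<^sub>R Uq j"
  shows "const_width UU PP"
  unfolding const_width_def
proof (intro exI[of _ c] allI impI)
  fix v assume v: "dual_norm UU v = 1"
  obtain J where J: "dual_norm UU v = det2 (Uq J) v" "width PP v = det2 (Pq J - Pq (J+n)) v"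
    using Wv[of v] by blast
  show "width PP v = c" using J v assms by simp
qed

lemma E_c_nonneg:
  assumes "\<forall>j. Pq j - Pq (j+n) = c *\<^sub>R Uq j"
  shows "c \<ge> 0"
proof -
  have "det2 (Pq 0 - Pq (0+n)) (e 0) \<ge> 0" by (rule Mmin[OF good_P])
  moreover have eq: "Pq 0 - Pq (0+n) = c *\<^sub>R Uq 0" using assms by blast
  ultimately have "det2 (c *\<^sub>R Uq 0) (e 0) \<ge> 0" by (simp only: eq)
  then have "c * det2 (Uq 0) (e 0) \<ge> 0" by simp
  then show ?thesis using delta_pos[of 0] by (simp add: zero_le_mult_iff)
qed

lemma E_c_nz:
  assumes int: "interior PP \<noteq> {}" and E: "\<forall>j. Pq j - Pq (j+n) = c *\<^sub>R Uq j"
  shows "c \<noteq> 0"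
proof
  assume c0: "c = 0"
  have yz: "Pq j - Pq (j+n) = 0" for j using E c0 by simp
  have lz: "lq j = 0" for j
  proof -
    have "(lq j + lq (j+n)) *\<^sub>R e j = 0" using ystep[of j] yz[of j] yz[of "Suc j"] by simp
    then have "lq j + lq (j+n) = 0" using e_nz by simp
    moreover have "lq j \<ge> 0" "lq (j+n) \<ge> 0" using sides' by auto
    ultimately show ?thesis by linarith
  qed
  have pc: "Pq j = Pq 0" for j
  proof (induction j)
    case 0 show ?case by simp
  next
    case (Suc j) then show ?case using sides'[of j] lz[of j] by simp
  qed
  have "P ` {..<2*n} = {P 0}"
  proof
    show "P ` {..<2*n} \<subseteq> {P 0}"
    proof
      fix x assume "x \<in> P ` {..<2*n}"
      then obtain k where k: "k < 2*n" "x = P k" by auto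
      then have "Pq k = x" by (simp add: Pq_def)
      then show "x \<in> {P 0}" using pc[of k] by (simp add: Pq_def)
    qed
    show "{P 0} \<subseteq> P ` {..<2*n}" using Npos by auto
  qed
  then have "PP = {P 0}" by (simp add: PP_def)
  then show False using int by simp
qed

definition rot :: "real^2 \<Rightarrow> real^2" where "rot a = (\<chi> i. if i = 1 then a$2 else - a$1)"

lemma det2_rot: "det2 z (rot a) = - inner a z"
  by (simp add: det2_def rot_def inner_vec_def sum_2 algebra_simps)

lemma sep:
  fixes S :: "(real^2) set"
  assumes "convex S" "compact S" "z \<notin> S"
  shows "\<exists>v b. det2 z v > b \<and> (\<forall>x\<in>S. det2 x v < b)"
proof -
  obtain a b where ab: "inner a z < b" "\<forall>x\<in>S. inner a x > b"
    using separating_hyperplane_closed_point[OF assms(1) compact_imp_closed[OF assms(2)] assms(3)] by blast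
  show ?thesis using ab by (intro exI[of _ "rot a"] exI[of _ "-b"]) (auto simp: det2_rot)
qed

lemma UU_cc: "convex UU" "compact UU"
  unfolding UU_def by (auto intro!: compact_convex_hull[OF finite_imp_compact])

lemma DD_cc: "convex DD" "compact DD"
proof -
  have cP: "convex PP" "compact PP" unfolding PP_def by (auto intro!: compact_convex_hull[OF finite_imp_compact])
  have "DD = (\<Union>x\<in>PP. \<Union>y\<in>(\<lambda>x. - x) ` PP. {x + y})"
    apply (auto simp: DD_def)
    subgoal for x y by (rule exI[of _ x], rule exI[of _ "-y"]) auto
    done
  then show "convex DD" using convex_sums[OF cP(1) convex_negations[OF cP(1)]] by simp
  have "DD = {x + y | x y. x \<in> PP \<and> y \<in> (\<lambda>x. - x) ` PP}" by (simp add: DD_def)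
  then show "compact DD" using compact_sums[OF cP(2) compact_negations[OF cP(2)]] by simp
qed

lemma E_to_hom:
  assumes int: "interior PP \<noteq> {}" and E: "\<forall>j. Pq j - Pq (j+n) = c *\<^sub>R Uq j"
  shows "homothetic DD UU"
proof -
  have cpos: "c > 0" using E_c_nonneg[OF E] E_c_nz[OF int E] by simp
  define S where "S = (\<lambda>x. c *\<^sub>R x) ` UU"
  have Scc: "convex S" "compact S" unfolding S_def
    using UU_cc by (auto intro: convex_scaling compact_scaling)
  have "DD = S"
  proof
    show "DD \<subseteq> S"
    proof
      fix x assume x: "x \<in> DD"
      show "x \<in> S"
      proof (rule ccontr)
        assume "x \<notin> S"
        then obtain v b where vb: "det2 x v > b" "\<forall>y\<in>S. det2 y v < b" using sep[OF Scc] by blast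
        obtain J where J: "\<forall>x\<in>DD. det2 x v \<le> det2 (Pq J - Pq (J+n)) v" using Wv[of v] by blast
        have "c *\<^sub>R Uq J \<in> S" unfolding S_def using UqUU by auto
        then have "det2 (c *\<^sub>R Uq J) v < b" using vb by blast
        moreover have "det2 x v \<le> det2 (c *\<^sub>R Uq J) v"
        proof -
          have eqJ: "Pq J - Pq (J+n) = c *\<^sub>R Uq J" using E by blast
          have "det2 x v \<le> det2 (Pq J - Pq (J+n)) v" using J x by blast
          then show ?thesis by (simp only: eqJ)
        qed
        ultimately show False using vb by linarith
      qed
    qed
    show "S \<subseteq> DD"
    proof
      fix y assume y: "y \<in> S"
      then obtain u where u: "u \<in> UU" "y = c *\<^sub>R u" unfolding S_def by blast
      show "y \<in> DD"
      proof (rule ccontr)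
        assume "y \<notin> DD"
        then obtain v b where vb: "det2 y v > b" "\<forall>z\<in>DD. det2 z v < b" using sep[OF DD_cc] by blast
        obtain J where J: "\<forall>x\<in>UU. det2 x v \<le> det2 (Uq J) v" "Pq J - Pq (J+n) \<in> DD"
          using Wv[of v] by blast
        have "det2 u v \<le> det2 (Uq J) v" using J u by blast
        then have le: "det2 y v \<le> det2 (c *\<^sub>R Uq J) v" using u cpos by (simp add: mult_left_mono)
        have lt: "det2 (Pq J - Pq (J+n)) v < b" using vb J by blast
        have eqJ: "Pq J - Pq (J+n) = c *\<^sub>R Uq J" using E by blast
        from lt have "det2 (c *\<^sub>R Uq J) v < b" by (simp only: eqJ)
        with le vb show False by linarith
      qed
    qed
  qed
  then show ?thesis unfolding homothetic_def S_def using cpos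
    by (intro exI[of _ c] exI[of _ 0]) auto
qed

lemma hom_to_cw:
  assumes "homothetic DD UU"
  shows "const_width UU PP"
proof -
  obtain a t where at: "a \<noteq> 0" "DD = (\<lambda>x. t + a *\<^sub>R x) ` UU"
    using assms by (auto simp: homothetic_def)
  have key: "width PP v = det2 t v + \<bar>a\<bar> * dual_norm UU v" for v
  proof -
    obtain J where J: "dual_norm UU v = det2 (Uq J) v" "width PP v = det2 (Pq J - Pq (J+n)) v"
      "\<forall>x\<in>UU. det2 x v \<le> det2 (Uq J) v \<and> det2 (Uq (J+n)) v \<le> det2 x v"
      "\<forall>x\<in>DD. det2 x v \<le> det2 (Pq J - Pq (J+n)) v" "Pq J - Pq (J+n) \<in> DD"
      using Wv[of v] by blast
    define u where "u = (if a > 0 then Uq J else Uq (J+n))"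
    have uU: "u \<in> UU" unfolding u_def using UqUU by simp
    have ub: "a * det2 x v \<le> \<bar>a\<bar> * det2 (Uq J) v" if x: "x \<in> UU" for x
    proof (cases "a > 0")
      case True then show ?thesis using J(3) x by (simp add: mult_left_mono)
    next
      case False
      then have "a * det2 x v \<le> a * det2 (Uq (J+n)) v" using J(3) x by (simp add: mult_left_mono_neg)
      then show ?thesis using False by (simp add: Uq_sym)
    qed
    have ue: "a * det2 u v = \<bar>a\<bar> * det2 (Uq J) v"
      using at(1) by (auto simp: u_def Uq_sym)
    obtain x0 where x0: "x0 \<in> UU" "Pq J - Pq (J+n) = t + a *\<^sub>R x0" using J(5) at(2) by auto
    have le1: "det2 (Pq J - Pq (J+n)) v \<le> det2 t v + \<bar>a\<bar> * det2 (Uq J) v"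
      using ub[OF x0(1)] unfolding x0(2) by simp
    have "t + a *\<^sub>R u \<in> DD" using at(2) uU by blast
    then have "det2 (t + a *\<^sub>R u) v \<le> det2 (Pq J - Pq (J+n)) v" using J(4) by blast
    then have le2: "det2 t v + \<bar>a\<bar> * det2 (Uq J) v \<le> det2 (Pq J - Pq (J+n)) v" using ue by simp
    show ?thesis using le1 le2 unfolding J(1) J(2) by linarith
  qed
  have dsym: "dual_norm UU (-v) = dual_norm UU v" for v
    using Wv[of v] by auto
  have wsym: "width PP (-v) = width PP v" for v by (simp add: width_def)
  show ?thesis unfolding const_width_def
  proof (intro exI[of _ "\<bar>a\<bar>"] allI impI)
    fix v assume v: "dual_norm UU v = 1"
    have "width PP v = det2 t v + \<bar>a\<bar>" using key[of v] v by simp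
    moreover have "width PP v = - det2 t v + \<bar>a\<bar>" using key[of "-v"] v dsym[of v] wsym[of v] by simp
    ultimately show "width PP v = \<bar>a\<bar>" by linarith
  qed
qed

lemma E_ext:
  assumes h: "\<forall>j<n. Pq j - Pq (j+n) = c *\<^sub>R Uq j"
  shows "\<forall>j. Pq j - Pq (j+n) = c *\<^sub>R Uq j"
proof
  fix j
  define r where "r = j mod (2*n)"
  have r: "r < 2*n" using Npos by (simp add: r_def)
  have "(j + n) mod (2*n) = (r + n) mod (2*n)" by (simp add: r_def mod_add_left_eq)
  then have e1: "Pq (j+n) = Pq (r+n)" by (simp add: Pq_def)
  have e2: "Pq j = Pq r" "Uq j = Uq r" by (simp_all add: r_def Pq_mod Uq_mod)
  show "Pq j - Pq (j+n) = c *\<^sub>R Uq j"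
  proof (cases "r < n")
    case True then show ?thesis using h e1 e2 by simp
  next
    case False
    define r' where "r' = r - n"
    have r': "r = r' + n" "r' < n" using False r by (auto simp: r'_def)
    have pr: "Pq (r + n) = Pq r'" using Pq_per[of r'] by (simp add: r' mult_2 add.assoc)
    have hr: "Pq r' - Pq (r'+n) = c *\<^sub>R Uq r'" using h r' by blast
    have "Pq j - Pq (j+n) = Pq (r'+n) - Pq r'" using e1 e2 pr r' by simp
    also have "\<dots> = - (c *\<^sub>R Uq r')" using hr by (simp add: algebra_simps)
    also have "\<dots> = c *\<^sub>R Uq j" using e2 r' Uq_sym[of r'] by simp
    finally show ?thesis .
  qed
qed

end

theorem corollary2p6:
  fixes n :: nat and U P :: "nat \<Rightarrow> real^2" and lam :: "nat \<Rightarrow> real"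
  assumes n2: "n \<ge> 2"
    and U_distinct: "inj_on U {..<2*n}"
    and U_convex_ccw: "\<forall>i<2*n. \<forall>j<2*n. j \<noteq> i \<and> j \<noteq> (i+1) mod (2*n) \<longrightarrow>
                          det2 (U ((i+1) mod (2*n)) - U i) (U j - U i) > 0"
    and U_sym: "\<forall>i<2*n. U ((i+n) mod (2*n)) = - U i"
    and P_interior: "interior (convex hull (P ` {..<2*n})) \<noteq> {}"
    and P_sides: "\<forall>i<2*n. lam i \<ge> 0 \<and>
                    P ((i+1) mod (2*n)) - P i = lam i *\<^sub>R (U ((i+1) mod (2*n)) - U i)"
  shows "let UU = convex hull (U ` {..<2*n}); PP = convex hull (P ` {..<2*n}) in
    (const_width UU PP \<longleftrightarrow> homothetic {p + q | p q. p \<in> PP \<and> q \<in> uminus ` PP} UU) \<and>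
    (const_width UU PP \<longleftrightarrow> (\<forall>i<n. parallel (P i - P (i+n)) (U i - U (i+n)))) \<and>
    (const_width UU PP \<longleftrightarrow> (\<exists>a. \<forall>i<n. P i - P (i+n) = (2*a) *\<^sub>R (U i - U (i+n))))"
proof -
  interpret c: cw n U P lam
    by unfold_locales (use n2 U_convex_ccw U_sym P_sides in auto)
  have UUe: "convex hull (U ` {..<2*n}) = c.UU" by (simp add: c.UU_def)
  have PPe: "convex hull (P ` {..<2*n}) = c.PP" by (simp add: c.PP_def)
  have DDe: "{p + q | p q. p \<in> c.PP \<and> q \<in> uminus ` c.PP} = c.DD" by (simp add: c.DD_def)
  have int: "interior c.PP \<noteq> {}" using P_interior PPe by simp
  define E where "E = (\<exists>cc. \<forall>j. c.Pq j - c.Pq (j+n) = cc *\<^sub>R c.Uq j)"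
  have cw_E: "const_width c.UU c.PP \<longleftrightarrow> E" using c.cw_to_E c.E_to_cw unfolding E_def by blast
  have h_E: "homothetic c.DD c.UU \<longleftrightarrow> E"
    using c.cw_to_E c.hom_to_cw c.E_to_hom[OF int] unfolding E_def by blast
  have Pd: "P i - P (i+n) = c.Pq i - c.Pq (i+n)" if "i < n" for i
    using that by (simp add: c.Pq_def)
  have Ud: "U i - U (i+n) = 2 *\<^sub>R c.Uq i" if "i < n" for i
  proof -
    have "U i = c.Uq i" "U (i+n) = c.Uq (i+n)" using that by (simp_all add: c.Uq_def)
    then show ?thesis by (simp add: c.Uq_sym scaleR_2)
  qed
  have s4: "(\<exists>a. \<forall>i<n. P i - P (i+n) = (2*a) *\<^sub>R (U i - U (i+n))) \<longleftrightarrow> E"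
  proof
    assume "\<exists>a. \<forall>i<n. P i - P (i+n) = (2*a) *\<^sub>R (U i - U (i+n))"
    then obtain a where a: "\<forall>i<n. P i - P (i+n) = (2*a) *\<^sub>R (U i - U (i+n))" by blast
    have "\<forall>j<n. c.Pq j - c.Pq (j+n) = (4*a) *\<^sub>R c.Uq j"
      using a Pd Ud by simp
    then show E unfolding E_def using c.E_ext by blast
  next
    assume E
    then obtain cc where cc: "\<forall>j. c.Pq j - c.Pq (j+n) = cc *\<^sub>R c.Uq j" unfolding E_def by blast
    show "\<exists>a. \<forall>i<n. P i - P (i+n) = (2*a) *\<^sub>R (U i - U (i+n))"
      by (rule exI[of _ "cc/4"]) (use cc Pd Ud in simp)
  qed
  have s3: "(\<forall>i<n. parallel (P i - P (i+n)) (U i - U (i+n))) \<longleftrightarrow> E"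
  proof
    assume E
    then obtain cc where cc: "\<forall>j. c.Pq j - c.Pq (j+n) = cc *\<^sub>R c.Uq j" unfolding E_def by blast
    show "\<forall>i<n. parallel (P i - P (i+n)) (U i - U (i+n))"
      using cc Pd Ud by (simp add: parallel_def)
  next
    assume par0: "\<forall>i<n. parallel (P i - P (i+n)) (U i - U (i+n))"
    have par: "det2 (c.Pq j - c.Pq (j+n)) (c.Uq j) = 0" if "j < n" for j
    proof -
      have "parallel (P j - P (j+n)) (U j - U (j+n))" using par0 that by blast
      then have "det2 (c.Pq j - c.Pq (j+n)) (2 *\<^sub>R c.Uq j) = 0"
        by (simp only: parallel_def Pd[OF that] Ud[OF that])
      then show ?thesis by simp
    qed
    have dpos: "det2 (c.Uq j) (c.Uq (Suc j)) > 0" for j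
      using c.delta_pos[of j] by (simp add: c.e_def)
    define d where "d = det2 (c.Uq 0) (c.Uq 1)"
    have d: "d \<noteq> 0" using dpos[of 0] by (simp add: d_def)
    define cc where "cc = det2 (c.Pq 0 - c.Pq (0+n)) (c.Uq 1) / d"
    have y0: "c.Pq 0 - c.Pq (0+n) = cc *\<^sub>R c.Uq 0"
      unfolding cc_def d_def by (rule det2_decomp) (use d par[of 0] n2 in \<open>simp_all add: d_def\<close>)
    have "j < n \<Longrightarrow> c.Pq j - c.Pq (j+n) = cc *\<^sub>R c.Uq j" for j
    proof (induction j)
      case 0 then show ?case using y0 by simp
    next
      case (Suc j)
      define sj where "sj = c.lq j + c.lq (j+n)"
      have IH: "c.Pq j - c.Pq (j+n) = cc *\<^sub>R c.Uq j" using Suc by simp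
      have ys: "c.Pq (Suc j) - c.Pq (Suc j + n) = cc *\<^sub>R c.Uq j + sj *\<^sub>R (c.Uq (Suc j) - c.Uq j)"
        using c.ystep[of j] IH by (simp add: sj_def c.e_def)
      have "det2 (c.Pq (Suc j) - c.Pq (Suc j + n)) (c.Uq (Suc j)) = 0" using par Suc.prems by simp
      then have "(cc - sj) * det2 (c.Uq j) (c.Uq (Suc j)) = 0" unfolding ys by (simp add: algebra_simps)
      then have "cc = sj" using dpos[of j] by simp
      then show ?case using ys by (simp add: algebra_simps)
    qed
    then show E unfolding E_def using c.E_ext by blast
  qed
  show ?thesis unfolding Let_def UUe PPe DDe using cw_E h_E s3 s4 by blast
qed

end
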